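(* Let $A$ be a prime unital alternative $*$-algebra over $\mathbb{C}$ with unit $1_A$, and let $n\ge2$ be a fixed integer. Assume that $A$ contains a nontrivial symmetric idempotent $e$ (i.e. $e^2=e=e^*$, $e\neq0$, $e\neq 1_A$). If a (not necessarily additive) map $\Phi:A\to A$ satisfies $$\Phi(a_1\bullet a_2\bullet\cdots\bullet a_n)=\sum_{k=1}^{n} a_1\bullet\cdots\bullet a_{k-1}\bullet\Phi(a_k)\bullet a_{k+1}\bullet\cdots\bullet a_n$$ for all $a_{n-1},a_n\in A$ and $a_i=1_A$ for all $i\in\{1,\dots,n-2\}$, then $\Phi$ is an additive $*$-derivation.
   Context: An algebra $A$ (not necessarily associative) is alternative if $a^2b=a(ab)$ and $ba^2=(ba)a$ for all $a,b\in A$; it is prime if whenever $a,b\in A$ satisfy $aAb=0$ (i.e. $(ax)b=0$ for all $x\in A$), then $a=0$ or $b=0$. An involution on $A$ is a map $*:A\to A$ with $(x+y)^*=x^*+y^*$, $(x^* )^*=x$, $(xy)^*=y^*x^*$. For $a,b\in A$ let $a\bullet b=ab+ba^*$, with left-normed iteration $a_1\bullet\cdots\bullet a_n=(\cdots((a_1\bullet a_2)\bullet a_3)\cdots)\bullet a_n$. A map $\Phi$ is an additive $*$-derivation if it is additive, $\Phi(ab)=\Phi(a)b+a\Phi(b)$ and $\Phi(a^* )=\Phi(a)^*$ for all $a,b\in A$. *)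

theory Defs
  imports Complex_Main
begin

definition complex_algebra :: "(complex \<Rightarrow> 'a::ab_group_add \<Rightarrow> 'a) \<Rightarrow> ('a \<Rightarrow> 'a \<Rightarrow> 'a) \<Rightarrow> bool" where
  "complex_algebra scl mul \<longleftrightarrow>
     Vector_Spaces.vector_space scl \<and>
     (\<forall>x y z. mul (x + y) z = mul x z + mul y z) \<and>
     (\<forall>x y z. mul x (y + z) = mul x y + mul x z) \<and>
     (\<forall>c x y. mul (scl c x) y = scl c (mul x y)) \<and>
     (\<forall>c x y. mul x (scl c y) = scl c (mul x y))"

definition alternative :: "('a \<Rightarrow> 'a \<Rightarrow> 'a) \<Rightarrow> bool" where
  "alternative mul \<longleftrightarrow>
     (\<forall>a b. mul (mul a a) b = mul a (mul a b)) \<and>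
     (\<forall>a b. mul b (mul a a) = mul (mul b a) a)"

definition prime_algebra :: "('a::zero \<Rightarrow> 'a \<Rightarrow> 'a) \<Rightarrow> bool" where
  "prime_algebra mul \<longleftrightarrow>
     (\<forall>a b. (\<forall>x. mul (mul a x) b = 0) \<longrightarrow> a = 0 \<or> b = 0)"

definition unit_of :: "('a \<Rightarrow> 'a \<Rightarrow> 'a) \<Rightarrow> 'a \<Rightarrow> bool" where
  "unit_of mul u \<longleftrightarrow> (\<forall>x. mul u x = x \<and> mul x u = x)"

definition involution :: "('a::plus \<Rightarrow> 'a \<Rightarrow> 'a) \<Rightarrow> ('a \<Rightarrow> 'a) \<Rightarrow> bool" where
  "involution mul st \<longleftrightarrow>
     (\<forall>x y. st (x + y) = st x + st y) \<and>
     (\<forall>x. st (st x) = x) \<and>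
     (\<forall>x y. st (mul x y) = mul (st y) (st x))"

definition complex_star_algebra ::
  "(complex \<Rightarrow> 'a::ab_group_add \<Rightarrow> 'a) \<Rightarrow> ('a \<Rightarrow> 'a \<Rightarrow> 'a) \<Rightarrow> ('a \<Rightarrow> 'a) \<Rightarrow> bool" where
  "complex_star_algebra scl mul st \<longleftrightarrow>
     complex_algebra scl mul \<and> involution mul st \<and>
     (\<forall>c x. st (scl c x) = scl (cnj c) (st x))"

definition jbullet :: "('a::plus \<Rightarrow> 'a \<Rightarrow> 'a) \<Rightarrow> ('a \<Rightarrow> 'a) \<Rightarrow> 'a \<Rightarrow> 'a \<Rightarrow> 'a" where
  "jbullet mul st a b = mul a b + mul b (st a)"

text \<open>Left-normed iteration a_1 \<bullet> a_2 \<bullet> ... \<bullet> a_n of a nonempty list.\<close>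

definition jbullet_list :: "('a::plus \<Rightarrow> 'a \<Rightarrow> 'a) \<Rightarrow> ('a \<Rightarrow> 'a) \<Rightarrow> 'a list \<Rightarrow> 'a" where
  "jbullet_list mul st xs = foldl (jbullet mul st) (hd xs) (tl xs)"

definition star_derivation ::
  "('a::plus \<Rightarrow> 'a \<Rightarrow> 'a) \<Rightarrow> ('a \<Rightarrow> 'a) \<Rightarrow> ('a \<Rightarrow> 'a) \<Rightarrow> bool" where
  "star_derivation mul st \<Phi> \<longleftrightarrow>
     (\<forall>a b. \<Phi> (a + b) = \<Phi> a + \<Phi> b) \<and>
     (\<forall>a b. \<Phi> (mul a b) = mul (\<Phi> a) b + mul a (\<Phi> b)) \<and>
     (\<forall>a. \<Phi> (st a) = st (\<Phi> a))"

end

theory Submission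
  imports Defs
begin


locale alg =
  fixes scl :: "complex \<Rightarrow> 'a::ab_group_add \<Rightarrow> 'a"
    and mul :: "'a \<Rightarrow> 'a \<Rightarrow> 'a" (infixl "\<odot>" 70)
    and st :: "'a \<Rightarrow> 'a"
    and one :: 'a
  assumes vs: "Vector_Spaces.vector_space scl"
    and addL: "(x + y) \<odot> z = x \<odot> z + y \<odot> z"
    and addR: "x \<odot> (y + z) = x \<odot> y + x \<odot> z"
    and sclL: "(scl c x) \<odot> y = scl c (x \<odot> y)"
    and sclR: "x \<odot> (scl c y) = scl c (x \<odot> y)"
    and st_add: "st (x + y) = st x + st y"
    and st_st[simp]: "st (st x) = x"
    and st_mul: "st (x \<odot> y) = st y \<odot> st x"
    and st_scl: "st (scl c x) = scl (cnj c) (st x)"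
    and unitL[simp]: "one \<odot> x = x"
    and unitR[simp]: "x \<odot> one = x"
    and altL: "(a \<odot> a) \<odot> b = a \<odot> (a \<odot> b)"
    and altR: "b \<odot> (a \<odot> a) = (b \<odot> a) \<odot> a"
    and prime: "(\<And>x. (a \<odot> x) \<odot> b = 0) \<Longrightarrow> a = 0 \<or> b = 0"
begin

interpretation V: vector_space scl by (rule vs)

lemmas scl_simps = V.scale_right_distrib V.scale_left_distrib V.scale_scale V.scale_one
  V.scale_zero_left V.scale_zero_right V.scale_minus_left V.scale_minus_right
  V.scale_right_diff_distrib V.scale_left_diff_distrib

lemma mul0L[simp]: "0 \<odot> x = 0"
proof -
  have "0 \<odot> x + 0 \<odot> x = 0 \<odot> x" using addL[of 0 0 x] by simp
  thus ?thesis by simp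
qed
lemma mul0R[simp]: "x \<odot> 0 = 0"
proof -
  have "x \<odot> 0 + x \<odot> 0 = x \<odot> 0" using addR[of x 0 0] by simp
  thus ?thesis by simp
qed
lemma negL[simp]: "(- x) \<odot> y = - (x \<odot> y)"
proof -
  have "(- x) \<odot> y + x \<odot> y = 0" using addL[of "-x" x y] by simp
  thus ?thesis by (simp add: eq_neg_iff_add_eq_0)
qed
lemma negR[simp]: "x \<odot> (- y) = - (x \<odot> y)"
proof -
  have "x \<odot> (- y) + x \<odot> y = 0" using addR[of x "-y" y] by simp
  thus ?thesis by (simp add: eq_neg_iff_add_eq_0)
qed
lemma diffL[simp]: "(x - y) \<odot> z = x \<odot> z - y \<odot> z"
  using addL[of x "-y" z] by simp
lemma diffR[simp]: "x \<odot> (y - z) = x \<odot> y - x \<odot> z"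
  using addR[of x y "-z"] by simp
lemma st0[simp]: "st 0 = 0"
proof -
  have "st 0 + st 0 = st 0" using st_add[of 0 0] by simp
  thus ?thesis by simp
qed
lemma st_neg[simp]: "st (- x) = - st x"
proof -
  have "st (- x) + st x = 0" using st_add[of "-x" x] by simp
  thus ?thesis by (simp add: eq_neg_iff_add_eq_0)
qed
lemma st_diff[simp]: "st (x - y) = st x - st y"
  using st_add[of x "-y"] by simp
lemma st_one[simp]: "st one = one"
proof -
  have "st one \<odot> x = x" for x
  proof -
    have "st one \<odot> x = st (st x \<odot> one)" using st_mul[of "st x" one] by simp
    also have "\<dots> = x" by simp
    finally show ?thesis .
  qed
  from this[of one] show ?thesis by simp
qed
lemma st_inj: "st x = st y \<longleftrightarrow> x = y" by (rule iffI, drule arg_cong[where f=st], simp_all)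
lemma st_eq0[simp]: "st x = 0 \<longleftrightarrow> x = 0" using st_inj[of x 0] by simp

lemmas ring_simps = addL addR sclL sclR st_add st_mul st_scl

end


context alg begin

interpretation V: vector_space scl by (rule vs)

lemma dbl0: "(z::'a) + z = 0 \<Longrightarrow> z = 0"
proof -
  assume h: "z + z = 0"
  have "scl (1/2) (z + z) = scl (1/2 + 1/2) z"
    by (simp only: V.scale_left_distrib V.scale_right_distrib)
  also have "(1/2 + 1/2 :: complex) = 1" by simp
  finally show ?thesis using h by simp
qed

lemma dbl_cancel: "(x::'a) + x = y + y \<Longrightarrow> x = y"
proof -
  assume "x + x = y + y"
  hence "(x - y) + (x - y) = 0" by (simp add: algebra_simps)
  hence "x - y = 0" by (rule dbl0)
  thus ?thesis by simp
qed

lemma trp0: "(z::'a) + z + z = 0 \<Longrightarrow> z = 0"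
proof -
  assume h: "z + z + z = 0"
  have "scl (1/3) (z + z + z) = scl (1/3 + 1/3 + 1/3) z"
    by (simp only: V.scale_left_distrib V.scale_right_distrib)
  also have "(1/3 + 1/3 + 1/3 :: complex) = 1" by simp
  finally show ?thesis using h by simp
qed

abbreviation J where "J a b \<equiv> jbullet mul st a b"

lemma J_def': "J a b = a \<odot> b + b \<odot> st a" by (simp add: jbullet_def)

lemma J_addL: "J (x + y) b = J x b + J y b" by (simp add: jbullet_def addL addR st_add algebra_simps)
lemma J_addR: "J a (x + y) = J a x + J a y" by (simp add: jbullet_def addL addR st_add algebra_simps)
lemma J_0L[simp]: "J 0 b = 0" by (simp add: jbullet_def)
lemma J_0R[simp]: "J a 0 = 0" by (simp add: jbullet_def)
lemma J_negL: "J (- x) b = - J x b" by (simp add: jbullet_def algebra_simps)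
lemma J_negR: "J a (- x) = - J a x" by (simp add: jbullet_def algebra_simps)
lemma J_diffL: "J (x - y) b = J x b - J y b" by (simp add: jbullet_def algebra_simps)
lemma J_diffR: "J a (x - y) = J a x - J a y" by (simp add: jbullet_def algebra_simps)
lemma J_sclR: "J a (scl c x) = scl c (J a x)" by (simp add: jbullet_def sclL sclR scl_simps)
lemma J_sclL: "cnj c = c \<Longrightarrow> J (scl c x) b = scl c (J x b)"
  by (simp add: jbullet_def sclL sclR st_scl scl_simps)
lemma J_oneL: "J one x = x + x" by (simp add: jbullet_def)
lemma J_oneR: "J x one = x + st x" by (simp add: jbullet_def)

lemmas J_lin = J_addL J_addR J_negL J_negR J_diffL J_diffR J_sclR

definition ass where "ass x y z = (x \<odot> y) \<odot> z - x \<odot> (y \<odot> z)"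

lemma ass_swap12: "ass x y z = - ass y x z"
proof -
  have h: "(x \<odot> y) \<odot> z + (y \<odot> x) \<odot> z = x \<odot> (y \<odot> z) + y \<odot> (x \<odot> z)"
    using altL[of "x+y" z] altL[of x z] altL[of y z] by (simp add: addL addR algebra_simps)
  show ?thesis unfolding ass_def using h by (simp add: algebra_simps)
qed

lemma ass_swap23: "ass x y z = - ass x z y"
proof -
  have h: "x \<odot> (y \<odot> z) + x \<odot> (z \<odot> y) = (x \<odot> y) \<odot> z + (x \<odot> z) \<odot> y"
    using altR[of x "y+z"] altR[of x y] altR[of x z] by (simp add: addL addR algebra_simps)
  show ?thesis unfolding ass_def using h by (simp add: algebra_simps)
qed

lemma flex: "(x \<odot> y) \<odot> x = x \<odot> (y \<odot> x)"
proof -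
  have "ass x y x = - ass x x y" by (rule ass_swap23)
  also have "ass x x y = 0" unfolding ass_def using altL[of x y] by simp
  finally show ?thesis unfolding ass_def by simp
qed

lemma pL: "p \<odot> (x \<odot> y) = (p \<odot> x) \<odot> y + (x \<odot> p) \<odot> y - x \<odot> (p \<odot> y)"
  using ass_swap12[of p x y] unfolding ass_def by (simp add: algebra_simps)

lemma pR: "(x \<odot> y) \<odot> p = x \<odot> (y \<odot> p) - (x \<odot> p) \<odot> y + x \<odot> (p \<odot> y)"
  using ass_swap23[of x y p] unfolding ass_def by (simp add: algebra_simps)

lemma central_nucleus:
  assumes c: "\<And>y. c \<odot> y = y \<odot> c"
  shows "(x \<odot> y) \<odot> c = x \<odot> (y \<odot> c)" "(x \<odot> c) \<odot> y = x \<odot> (c \<odot> y)" "(c \<odot> x) \<odot> y = c \<odot> (x \<odot> y)"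
proof -
  have id: "((x \<odot> y) \<odot> c - c \<odot> (x \<odot> y)) - (x \<odot> (y \<odot> c) - x \<odot> (c \<odot> y)) - ((x \<odot> c) \<odot> y - (c \<odot> x) \<odot> y)
      = ass x y c - ass x c y + ass c x y"
    unfolding ass_def by (simp add: algebra_simps)
  have l: "((x \<odot> y) \<odot> c - c \<odot> (x \<odot> y)) - (x \<odot> (y \<odot> c) - x \<odot> (c \<odot> y)) - ((x \<odot> c) \<odot> y - (c \<odot> x) \<odot> y) = 0"
    using c[of "x \<odot> y"] c[of y] c[of x] by simp
  have a1: "ass x c y = - ass x y c" using ass_swap23[of x c y] .
  have a2: "ass c x y = ass x y c" using ass_swap12[of c x y] ass_swap23[of x c y] by simp
  have "ass x y c + ass x y c + ass x y c = 0" using id l a1 a2 by (simp add: algebra_simps)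
  hence z: "ass x y c = 0" by (rule trp0)
  show "(x \<odot> y) \<odot> c = x \<odot> (y \<odot> c)" using z unfolding ass_def by simp
  show "(x \<odot> c) \<odot> y = x \<odot> (c \<odot> y)" using z a1 unfolding ass_def by simp
  show "(c \<odot> x) \<odot> y = c \<odot> (x \<odot> y)" using z a2 unfolding ass_def by simp
qed

end


locale idp = alg +
  fixes p :: 'a
  assumes pp: "p \<odot> p = p" and sp: "st p = p"
begin

interpretation V: vector_space scl by (rule vs)

definition "A11 x \<longleftrightarrow> p \<odot> x = x \<and> x \<odot> p = x"
definition "A12 x \<longleftrightarrow> p \<odot> x = x \<and> x \<odot> p = 0"
definition "A21 x \<longleftrightarrow> p \<odot> x = 0 \<and> x \<odot> p = x"
definition "A22 x \<longleftrightarrow> p \<odot> x = 0 \<and> x \<odot> p = 0"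

definition "pi11 x = (p \<odot> x) \<odot> p"
definition "pi12 x = p \<odot> x - (p \<odot> x) \<odot> p"
definition "pi21 x = x \<odot> p - (p \<odot> x) \<odot> p"
definition "pi22 x = x - p \<odot> x - x \<odot> p + (p \<odot> x) \<odot> p"

lemma ppx[simp]: "p \<odot> (p \<odot> x) = p \<odot> x" using altL[of p x] pp by simp
lemma xpp[simp]: "(x \<odot> p) \<odot> p = x \<odot> p" using altR[of x p] pp by simp
lemma pxp: "(p \<odot> x) \<odot> p = p \<odot> (x \<odot> p)" by (rule flex)
lemma pxpp[simp]: "(p \<odot> (x \<odot> p)) \<odot> p = p \<odot> (x \<odot> p)" by (metis pxp xpp)

lemma zL2: "p \<odot> z = z + z \<Longrightarrow> z = 0"
proof -
  assume h: "p \<odot> z = z + z"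
  have "p \<odot> (p \<odot> z) = p \<odot> z" by simp
  hence "(z + z) + (z + z) = z + z" using h by (simp add: addR)
  hence "z + z = 0" by simp
  thus ?thesis by (rule dbl0)
qed
lemma zR2: "z \<odot> p = z + z \<Longrightarrow> z = 0"
proof -
  assume h: "z \<odot> p = z + z"
  have "(z \<odot> p) \<odot> p = z \<odot> p" by simp
  hence "(z + z) + (z + z) = z + z" using h by (simp add: addL)
  hence "z + z = 0" by simp
  thus ?thesis by (rule dbl0)
qed
lemma zLm: "p \<odot> z = - z \<Longrightarrow> z = 0"
proof -
  assume h: "p \<odot> z = - z"
  have "p \<odot> (p \<odot> z) = p \<odot> z" by simp
  hence "z = - z" using h by simp
  hence "z + z = 0" by (metis add.right_inverse)
  thus ?thesis by (rule dbl0)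
qed
lemma zRm: "z \<odot> p = - z \<Longrightarrow> z = 0"
proof -
  assume h: "z \<odot> p = - z"
  have "(z \<odot> p) \<odot> p = z \<odot> p" by simp
  hence "z = - z" using h by simp
  hence "z + z = 0" by (metis add.right_inverse)
  thus ?thesis by (rule dbl0)
qed

lemma A11_pi: "A11 (pi11 x)" unfolding A11_def pi11_def using pxp[of x] by simp
lemma A12_pi: "A12 (pi12 x)" unfolding A12_def pi12_def using pxp[of x] by (simp add: diffR)
lemma A21_pi: "A21 (pi21 x)" unfolding A21_def pi21_def using pxp[of x] by (simp add: diffR)
lemma A22_pi: "A22 (pi22 x)" unfolding A22_def pi22_def using pxp[of x] by (simp add: addR addL)
lemma pi_sum: "pi11 x + pi12 x + pi21 x + pi22 x = x"
  unfolding pi11_def pi12_def pi21_def pi22_def by (simp add: algebra_simps)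

lemma pi_add: "pi11 (x + y) = pi11 x + pi11 y" "pi12 (x + y) = pi12 x + pi12 y"
  "pi21 (x + y) = pi21 x + pi21 y" "pi22 (x + y) = pi22 x + pi22 y"
  unfolding pi11_def pi12_def pi21_def pi22_def by (simp_all add: addL addR algebra_simps)

lemma pi_A11: "A11 x \<Longrightarrow> pi11 x = x \<and> pi12 x = 0 \<and> pi21 x = 0 \<and> pi22 x = 0"
  unfolding A11_def pi11_def pi12_def pi21_def pi22_def by simp
lemma pi_A12: "A12 x \<Longrightarrow> pi11 x = 0 \<and> pi12 x = x \<and> pi21 x = 0 \<and> pi22 x = 0"
  unfolding A12_def pi11_def pi12_def pi21_def pi22_def by simp
lemma pi_A21: "A21 x \<Longrightarrow> pi11 x = 0 \<and> pi12 x = 0 \<and> pi21 x = x \<and> pi22 x = 0"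
  unfolding A21_def pi11_def pi12_def pi21_def pi22_def by simp
lemma pi_A22: "A22 x \<Longrightarrow> pi11 x = 0 \<and> pi12 x = 0 \<and> pi21 x = 0 \<and> pi22 x = x"
  unfolding A22_def pi11_def pi12_def pi21_def pi22_def by simp

lemma pi_decomp:
  assumes "A11 w1" "A12 w2" "A21 w3" "A22 w4"
  shows "pi11 (w1 + w2 + w3 + w4) = w1" "pi12 (w1 + w2 + w3 + w4) = w2"
    "pi21 (w1 + w2 + w3 + w4) = w3" "pi22 (w1 + w2 + w3 + w4) = w4"
  using pi_A11[OF assms(1)] pi_A12[OF assms(2)] pi_A21[OF assms(3)] pi_A22[OF assms(4)]
  by (simp_all add: pi_add)

lemma A12_A21_0: "A12 u \<Longrightarrow> A21 v \<Longrightarrow> u + v = 0 \<Longrightarrow> u = 0 \<and> v = 0"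
  unfolding A12_def A21_def using addR[of p u v] by auto

lemma A_scl: "A11 x \<Longrightarrow> A11 (scl c x)" "A12 x \<Longrightarrow> A12 (scl c x)" "A21 x \<Longrightarrow> A21 (scl c x)" "A22 x \<Longrightarrow> A22 (scl c x)"
  unfolding A11_def A12_def A21_def A22_def by (simp_all add: sclL sclR)
lemma A_add: "A11 x \<Longrightarrow> A11 y \<Longrightarrow> A11 (x + y)" "A12 x \<Longrightarrow> A12 y \<Longrightarrow> A12 (x + y)"
  "A21 x \<Longrightarrow> A21 y \<Longrightarrow> A21 (x + y)" "A22 x \<Longrightarrow> A22 y \<Longrightarrow> A22 (x + y)"
  unfolding A11_def A12_def A21_def A22_def by (simp_all add: addL addR)
lemma A_0[simp]: "A11 0" "A12 0" "A21 0" "A22 0"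
  unfolding A11_def A12_def A21_def A22_def by simp_all
lemma A_st: "A12 x \<Longrightarrow> A21 (st x)" "A21 x \<Longrightarrow> A12 (st x)" "A11 x \<Longrightarrow> A11 (st x)" "A22 x \<Longrightarrow> A22 (st x)"
  unfolding A11_def A12_def A21_def A22_def
  using st_mul[of x p] st_mul[of p x] sp by auto

lemma p_A11: "A11 p" unfolding A11_def by (simp add: pp)

lemma m12_12: "A12 x \<Longrightarrow> A12 y \<Longrightarrow> A21 (x \<odot> y)"
  unfolding A12_def A21_def using pL[of p x y] pR[of x y p] by simp
lemma m12_21: "A12 x \<Longrightarrow> A21 y \<Longrightarrow> A11 (x \<odot> y)"
  unfolding A12_def A21_def A11_def using pL[of p x y] pR[of x y p] by simp
lemma m21_11: "A21 x \<Longrightarrow> A11 y \<Longrightarrow> A21 (x \<odot> y)"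
  unfolding A11_def A21_def using pL[of p x y] pR[of x y p] by simp
lemma m11_12: "A11 x \<Longrightarrow> A12 y \<Longrightarrow> A12 (x \<odot> y)"
  unfolding A11_def A12_def using pL[of p x y] pR[of x y p] by simp
lemma m11_11: "A11 x \<Longrightarrow> A11 y \<Longrightarrow> A11 (x \<odot> y)"
  unfolding A11_def using pL[of p x y] pR[of x y p] by simp
lemma m11_21: "A11 x \<Longrightarrow> A21 y \<Longrightarrow> x \<odot> y = 0"
  unfolding A11_def A21_def using pL[of p x y] by (intro zL2) simp
lemma m11_22: "A11 x \<Longrightarrow> A22 y \<Longrightarrow> x \<odot> y = 0"
  unfolding A11_def A22_def using pL[of p x y] by (intro zL2) simp
lemma m12_11: "A12 x \<Longrightarrow> A11 y \<Longrightarrow> x \<odot> y = 0"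
  unfolding A11_def A12_def using pR[of x y p] by (intro zR2) simp

end

lemma (in alg) idp_compl: "p \<odot> p = p \<Longrightarrow> st p = p \<Longrightarrow> idp scl mul st one (one - p)"
  unfolding idp_def idp_axioms_def using alg_axioms by (simp add: diffL diffR)

context idp begin
abbreviation "q \<equiv> one - p"
lemma q_idp: "idp scl mul st one q" using idp_compl pp sp by simp
lemma qx: "q \<odot> x = x - p \<odot> x" by simp
lemma xq: "x \<odot> q = x - x \<odot> p" by simp
lemma qA12: "idp.A12 mul q x \<longleftrightarrow> A21 x"
  unfolding idp.A12_def[OF q_idp] A21_def by auto
lemma qA21: "idp.A21 mul q x \<longleftrightarrow> A12 x"
  unfolding idp.A21_def[OF q_idp] A12_def by auto
lemma qA11: "idp.A11 mul q x \<longleftrightarrow> A22 x"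
  unfolding idp.A11_def[OF q_idp] A22_def by auto
lemma qA22: "idp.A22 mul q x \<longleftrightarrow> A11 x"
  unfolding idp.A22_def[OF q_idp] A11_def by auto
end



locale der = alg +
  fixes \<Phi> :: "'a \<Rightarrow> 'a" and M :: complex and W :: 'a
  assumes M_real: "cnj M = M" and M_nz: "M \<noteq> 0"
    and H: "\<And>a b. \<Phi> (scl M (J a b)) = scl M (J (\<Phi> a) b) + scl M (J a (\<Phi> b)) + J (J W a) b"
begin

interpretation V: vector_space scl by (rule vs)

definition "D x y = \<Phi> (x + y) - \<Phi> x - \<Phi> y"

lemma K_inj: "scl M x = scl M y \<longleftrightarrow> x = y" using M_nz by simp
lemma K_0: "scl M x = 0 \<longleftrightarrow> x = 0" using M_nz by simp

lemma Phi0[simp]: "\<Phi> 0 = 0"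
  using H[of 0 0] by simp

lemma D0[simp]: "D x 0 = 0" "D 0 y = 0" unfolding D_def by simp_all

lemma E2: "D (scl M (J c x)) (scl M (J c y)) = scl M (J c (D x y))"
proof -
  have h1: "\<Phi> (scl M (J c x) + scl M (J c y)) = scl M (J (\<Phi> c) x) + scl M (J (\<Phi> c) y)
      + scl M (J c (\<Phi> (x+y))) + (J (J W c) x + J (J W c) y)"
    using H[of c "x+y"] by (simp add: J_addR scl_simps)
  show ?thesis unfolding D_def using h1 H[of c x] H[of c y]
    by (simp add: J_diffR J_addR scl_simps algebra_simps)
qed

lemma E1: "D (scl M (J x c)) (scl M (J y c)) = scl M (J (D x y) c)"
proof -
  have h1: "\<Phi> (scl M (J x c) + scl M (J y c)) = scl M (J (\<Phi> (x+y)) c)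
      + scl M (J x (\<Phi> c)) + scl M (J y (\<Phi> c)) + (J (J W x) c + J (J W y) c)"
    using H[of "x+y" c] by (simp add: J_addL J_addR scl_simps)
  show ?thesis unfolding D_def using h1 H[of x c] H[of y c]
    by (simp add: J_diffL J_addL scl_simps algebra_simps)
qed

lemma E2_4: "\<Phi> (scl M (J c (x1 + x2 + x3 + x4))) - \<Phi> (scl M (J c x1)) - \<Phi> (scl M (J c x2))
   - \<Phi> (scl M (J c x3)) - \<Phi> (scl M (J c x4))
   = scl M (J c (\<Phi> (x1 + x2 + x3 + x4) - \<Phi> x1 - \<Phi> x2 - \<Phi> x3 - \<Phi> x4))"
proof -
  have h1: "\<Phi> (scl M (J c (x1 + x2 + x3 + x4))) = scl M (J (\<Phi> c) x1) + scl M (J (\<Phi> c) x2)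
      + scl M (J (\<Phi> c) x3) + scl M (J (\<Phi> c) x4)
      + scl M (J c (\<Phi> (x1 + x2 + x3 + x4))) + (J (J W c) x1 + J (J W c) x2 + J (J W c) x3 + J (J W c) x4)"
    using H[of c "x1 + x2 + x3 + x4"] by (simp add: J_addR scl_simps)
  show ?thesis using h1 H[of c x1] H[of c x2] H[of c x3] H[of c x4]
    by (simp add: J_diffR J_addR scl_simps algebra_simps)
qed

end

locale derp = der + idp +
  assumes p0: "p \<noteq> 0" and p1: "p \<noteq> one"
begin

interpretation V: vector_space scl by (rule vs)

lemma Jp: "A11 x \<Longrightarrow> J p x = x + x" "A12 x \<Longrightarrow> J p x = x" "A21 x \<Longrightarrow> J p x = x" "A22 x \<Longrightarrow> J p x = 0"
  unfolding A11_def A12_def A21_def A22_def J_def' by (simp_all add: sp)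
lemma Jq: "A11 x \<Longrightarrow> J q x = 0" "A12 x \<Longrightarrow> J q x = x" "A21 x \<Longrightarrow> J q x = x" "A22 x \<Longrightarrow> J q x = x + x"
  unfolding A11_def A12_def A21_def A22_def J_def' by (simp_all add: sp)
lemma Jip: "A11 x \<Longrightarrow> J (scl \<i> p) x = 0" "A12 x \<Longrightarrow> J (scl \<i> p) x = scl \<i> x"
  "A21 x \<Longrightarrow> J (scl \<i> p) x = - scl \<i> x" "A22 x \<Longrightarrow> J (scl \<i> p) x = 0"
  unfolding A11_def A12_def A21_def A22_def J_def' by (simp_all add: sp st_scl sclL sclR scl_simps)

lemma C2: assumes x: "A11 x" and y: "A22 y" shows "D x y = 0"
proof -
  have "D (scl M (J p x)) (scl M (J p y)) = 0" using Jp(1)[OF x] Jp(4)[OF y] by simp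
  hence a: "J p (D x y) = 0" using E2[of p x y] K_0 by simp
  have "D (scl M (J q x)) (scl M (J q y)) = 0" using Jq(1)[OF x] Jq(4)[OF y] by simp
  hence b: "J q (D x y) = 0" using E2[of q x y] K_0 by simp
  have "J one (D x y) = J p (D x y) + J q (D x y)" using J_addL[of p q "D x y"] by simp
  hence "D x y + D x y = 0" using a b J_oneL by simp
  thus ?thesis by (rule dbl0)
qed

lemma A_neg: "A11 x \<Longrightarrow> A11 (- x)" "A12 x \<Longrightarrow> A12 (- x)" "A21 x \<Longrightarrow> A21 (- x)" "A22 x \<Longrightarrow> A22 (- x)"
  unfolding A11_def A12_def A21_def A22_def by simp_all

lemma C3a: assumes x: "A12 x" and y: "A21 y" shows "J (scl \<i> p) (D x y) = 0"
proof -
  let ?D = "D x y"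
  have sx: "A21 (st x)" and sy: "A12 (st y)" using A_st x y by auto
  have jx: "J x p = 0" using x sx unfolding J_def' A12_def A21_def by simp
  hence "D (scl M (J x p)) (scl M (J y p)) = 0" by simp
  hence a: "J ?D p = 0" using E1[of x p y] K_0 by simp
  have jy: "J y q = 0" using y sy unfolding J_def' A12_def A21_def by simp
  hence "D (scl M (J x q)) (scl M (J y q)) = 0" by simp
  hence b: "J ?D q = 0" using E1[of x q y] K_0 by simp
  have "J ?D one = J ?D p + J ?D q" using J_addR[of ?D p q] by simp
  hence "?D + st ?D = 0" using a b J_oneR by simp
  hence sD: "st ?D = - ?D" by (simp add: eq_neg_iff_add_eq_0 add.commute)
  from a have c: "?D \<odot> p = p \<odot> ?D" using sD unfolding J_def' by simp
  show ?thesis unfolding J_def' using sD c by (simp add: st_scl sp sclL sclR)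
qed

lemma C3: assumes u: "A12 u" and v: "A21 v" shows "D u v = 0"
proof -
  define x where "x = scl (- \<i> / M) u"
  define y where "y = scl (\<i> / M) v"
  have x: "A12 x" unfolding x_def by (rule A_scl(2)[OF u])
  have y: "A21 y" unfolding y_def by (rule A_scl(3)[OF v])
  have ux: "scl M (J (scl \<i> p) x) = u" using Jip(2)[OF x] M_nz unfolding x_def by simp
  have vy: "scl M (J (scl \<i> p) y) = v" using Jip(3)[OF y] M_nz unfolding y_def by simp
  have "D u v = scl M (J (scl \<i> p) (D x y))" using E2[of "scl \<i> p" x y] ux vy by simp
  thus ?thesis using C3a[OF x y] by simp
qed

lemma C4: "\<Phi> x = \<Phi> (pi11 x) + \<Phi> (pi12 x) + \<Phi> (pi21 x) + \<Phi> (pi22 x)"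
proof -
  let ?a = "pi11 x" and ?b = "pi12 x" and ?c = "pi21 x" and ?d = "pi22 x"
  have a: "A11 ?a" and b: "A12 ?b" and c: "A21 ?c" and d: "A22 ?d"
    using A11_pi A12_pi A21_pi A22_pi by auto
  have xs: "?a + ?b + ?c + ?d = x" by (rule pi_sum)
  define S where "S = \<Phi> x - \<Phi> ?a - \<Phi> ?b - \<Phi> ?c - \<Phi> ?d"
  have E: "\<Phi> (scl M (J cc x)) - \<Phi> (scl M (J cc ?a)) - \<Phi> (scl M (J cc ?b))
     - \<Phi> (scl M (J cc ?c)) - \<Phi> (scl M (J cc ?d)) = scl M (J cc S)" for cc
    using E2_4[of cc ?a ?b ?c ?d] unfolding xs S_def .
  have Jx: "J cc x = J cc ?a + J cc ?b + J cc ?c + J cc ?d" for cc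
    using xs J_addR by metis
  have t1: "J (p - q) ?a = ?a + ?a" "J (p - q) ?b = 0" "J (p - q) ?c = 0" "J (p - q) ?d = - (?d + ?d)"
    using Jp[of ?a] Jq[of ?a] Jp[of ?b] Jq[of ?b] Jp[of ?c] Jq[of ?c] Jp[of ?d] Jq[of ?d] a b c d
    by (simp_all add: J_diffL)
  have aa: "A11 (scl M (?a + ?a))" by (rule A_scl(1)[OF A_add(1)[OF a a]])
  have dd: "A22 (scl M (- (?d + ?d)))" by (rule A_scl(4)[OF A_neg(4)[OF A_add(4)[OF d d]]])
  have "scl M (J (p - q) S) = D (scl M (?a + ?a)) (scl M (- (?d + ?d)))"
    using E[of "p - q"] Jx[of "p - q"] t1 unfolding D_def by (simp add: scl_simps)
  hence S1: "J (p - q) S = 0" using C2[OF aa dd] K_0 by simp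
  have t2: "J (scl \<i> p) ?a = 0" "J (scl \<i> p) ?b = scl \<i> ?b" "J (scl \<i> p) ?c = - scl \<i> ?c" "J (scl \<i> p) ?d = 0"
    using Jip a b c d by auto
  have bb: "A12 (scl M (scl \<i> ?b))" by (rule A_scl(2)[OF A_scl(2)[OF b]])
  have cc: "A21 (scl M (- scl \<i> ?c))" by (rule A_scl(3)[OF A_neg(3)[OF A_scl(3)[OF c]]])
  have "scl M (J (scl \<i> p) S) = D (scl M (scl \<i> ?b)) (scl M (- scl \<i> ?c))"
    using E[of "scl \<i> p"] Jx[of "scl \<i> p"] t2 unfolding D_def by (simp add: scl_simps)
  hence S2: "J (scl \<i> p) S = 0" using C3[OF bb cc] K_0 by simp
  have comm: "p \<odot> S = S \<odot> p"
  proof -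
    have "scl \<i> (p \<odot> S - S \<odot> p) = 0" using S2 unfolding J_def'
      by (simp add: st_scl sp sclL sclR scl_simps)
    thus ?thesis by simp
  qed
  let ?t = "p \<odot> S"
  have "(?t + ?t) + (?t + ?t) = S + S" using S1 comm unfolding J_def'
    by (simp add: sp addL addR st_add algebra_simps)
  hence tt: "?t + ?t = S" by (rule dbl_cancel)
  have "p \<odot> (?t + ?t) = ?t + ?t" by (simp add: addR)
  hence "?t + ?t = ?t" using tt by simp
  hence "?t = 0" by simp
  thus "\<Phi> x = \<Phi> ?a + \<Phi> ?b + \<Phi> ?c + \<Phi> ?d" using tt unfolding S_def by (simp add: algebra_simps)
qed

lemma Sdec: assumes "A11 w1" "A12 w2" "A21 w3" "A22 w4"
  shows "\<Phi> (w1 + w2 + w3 + w4) = \<Phi> w1 + \<Phi> w2 + \<Phi> w3 + \<Phi> w4"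
  using C4[of "w1 + w2 + w3 + w4"] pi_decomp[OF assms] by simp

lemma C5: assumes x: "A12 x" and y: "A12 y" shows "A12 (D x y)"
proof -
  let ?D = "D x y"
  have "scl M (J p ?D) = scl M (J q ?D)"
    using E2[of p x y] E2[of q x y] Jp(2)[OF x] Jp(2)[OF y] Jq(2)[OF x] Jq(2)[OF y] by simp
  hence e1: "J p ?D = J q ?D" using M_nz by simp
  have sx: "A21 (st x)" and sy: "A21 (st y)" using A_st x y by auto
  have "J x p = 0" "J y p = 0" using x y sx sy unfolding J_def' A12_def A21_def by simp_all
  hence "scl M (J ?D p) = 0" using E1[of x p y] by simp
  hence e2: "?D \<odot> p + p \<odot> st ?D = 0" unfolding J_def' using M_nz by (simp add: sp)
  have "(p \<odot> ?D + ?D \<odot> p) + (p \<odot> ?D + ?D \<odot> p) = ?D + ?D"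
    using e1 unfolding J_def' by (simp add: sp algebra_simps)
  hence e3: "p \<odot> ?D + ?D \<odot> p = ?D" by (rule dbl_cancel)
  have "p \<odot> (p \<odot> ?D + ?D \<odot> p) = p \<odot> ?D" using e3 by simp
  hence e4: "p \<odot> (?D \<odot> p) = 0" by (simp add: addR)
  have e5: "(p \<odot> st ?D) \<odot> p = 0"
  proof -
    have "st ((p \<odot> st ?D) \<odot> p) = p \<odot> (?D \<odot> p)" by (simp add: st_mul sp)
    thus ?thesis using e4 by simp
  qed
  have "(?D \<odot> p + p \<odot> st ?D) \<odot> p = 0" using e2 by simp
  hence e6: "?D \<odot> p = 0" using e5 by (simp add: addL)
  thus ?thesis unfolding A12_def using e3 by simp
qed

end



context derp begin

interpretation V: vector_space scl by (rule vs)

lemma derp_q: "derp scl mul st one \<Phi> M W q"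
  unfolding derp_def derp_axioms_def using der_axioms q_idp p0 p1 by auto

lemma DPhi: "D u v = 0 \<Longrightarrow> \<Phi> (u + v) = \<Phi> u + \<Phi> v" unfolding D_def by (simp add: algebra_simps)

lemma q_A22: "A22 q" unfolding A22_def by (simp add: pp)

lemma H4: assumes "\<Phi> (x1 + x2) = \<Phi> x1 + \<Phi> x2" and "\<Phi> (y1 + y2) = \<Phi> y1 + \<Phi> y2"
  shows "\<Phi> (scl M (J (x1 + x2) (y1 + y2))) = \<Phi> (scl M (J x1 y1)) + \<Phi> (scl M (J x1 y2))
     + \<Phi> (scl M (J x2 y1)) + \<Phi> (scl M (J x2 y2))"
proof -
  have "\<Phi> (scl M (J (x1 + x2) (y1 + y2))) = scl M (J (\<Phi> x1 + \<Phi> x2) (y1 + y2))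
     + scl M (J (x1 + x2) (\<Phi> y1 + \<Phi> y2)) + J (J W (x1 + x2)) (y1 + y2)"
    using H[of "x1 + x2" "y1 + y2"] assms by simp
  also have "\<dots> = \<Phi> (scl M (J x1 y1)) + \<Phi> (scl M (J x1 y2)) + \<Phi> (scl M (J x2 y1)) + \<Phi> (scl M (J x2 y2))"
    using H[of x1 y1] H[of x1 y2] H[of x2 y1] H[of x2 y2] by (simp add: J_addL J_addR scl_simps algebra_simps)
  finally show ?thesis .
qed

lemma C6: assumes x: "A12 x" and y: "A12 y" shows "D x y = 0"
proof -
  have key: "D (scl M a) (scl M b) = 0" if a: "A12 a" and b: "A12 b" for a b
  proof -
    let ?K = "scl M"
    have sa: "A21 (st a)" using A_st a by auto
    have ab: "A21 (a \<odot> b)" using m12_12[OF a b] .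
    have bsa: "A11 (b \<odot> st a)" using m12_21[OF b sa] .
    have PX: "\<Phi> (p + a) = \<Phi> p + \<Phi> a" using Sdec[OF p_A11 a A_0(3) A_0(4)] by simp
    have PY: "\<Phi> (q + b) = \<Phi> q + \<Phi> b" using Sdec[OF A_0(1) b A_0(3) q_A22] by (simp add: add.commute)
    have main: "\<Phi> (?K (J (p + a) (q + b))) = \<Phi> (?K (J p q)) + \<Phi> (?K (J p b)) + \<Phi> (?K (J a q)) + \<Phi> (?K (J a b))"
      using H4[OF PX PY] by (simp add: algebra_simps)
    have j1: "J p q = 0" unfolding J_def' by (simp add: sp pp)
    have j2: "J p b = b" using Jp(2)[OF b] .
    have j3: "J a q = a + st a" using a sa unfolding J_def' A12_def A21_def by simp
    have j4: "J a b = a \<odot> b + b \<odot> st a" unfolding J_def' ..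
    have jXY: "J (p + a) (q + b) = J p q + J p b + J a q + J a b" by (simp add: J_addL J_addR)
    have l1: "\<Phi> (?K (J (p + a) (q + b))) = \<Phi> (?K (b \<odot> st a)) + \<Phi> (?K a + ?K b) + \<Phi> (?K (st a) + ?K (a \<odot> b))"
    proof -
      have "?K (J (p + a) (q + b)) = ?K (b \<odot> st a) + (?K a + ?K b) + (?K (st a) + ?K (a \<odot> b)) + 0"
        unfolding jXY j1 j2 j3 j4 by (simp add: scl_simps algebra_simps)
      hence "\<Phi> (?K (J (p + a) (q + b))) = \<Phi> (?K (b \<odot> st a)) + \<Phi> (?K a + ?K b) + \<Phi> (?K (st a) + ?K (a \<odot> b)) + \<Phi> 0"
        using Sdec[OF A_scl(1)[OF bsa] A_add(2)[OF A_scl(2)[OF a] A_scl(2)[OF b]]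
            A_add(3)[OF A_scl(3)[OF sa] A_scl(3)[OF ab]] A_0(4)] by simp
      thus ?thesis by simp
    qed
    have l3: "\<Phi> (?K (J a q)) = \<Phi> (?K a) + \<Phi> (?K (st a))"
      unfolding j3 scl_simps using C3[OF A_scl(2)[OF a] A_scl(3)[OF sa]] by (rule DPhi)
    have l4: "\<Phi> (?K (J a b)) = \<Phi> (?K (a \<odot> b)) + \<Phi> (?K (b \<odot> st a))"
    proof -
      have "\<Phi> (?K (b \<odot> st a) + 0 + ?K (a \<odot> b) + 0) = \<Phi> (?K (b \<odot> st a)) + \<Phi> 0 + \<Phi> (?K (a \<odot> b)) + \<Phi> 0"
        using Sdec[OF A_scl(1)[OF bsa] A_0(2) A_scl(3)[OF ab] A_0(4)] .
      thus ?thesis unfolding j4 by (simp add: scl_simps algebra_simps)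
    qed
    have "D (?K a) (?K b) + D (?K (st a)) (?K (a \<odot> b)) = 0"
      using main l1 l3 l4 j1 j2 unfolding D_def by (simp add: algebra_simps)
    moreover have "A12 (D (?K a) (?K b))" using C5[OF A_scl(2)[OF a] A_scl(2)[OF b]] .
    moreover have "A21 (D (?K (st a)) (?K (a \<odot> b)))"
      using derp.C5[OF derp_q] A_scl(3)[OF sa] A_scl(3)[OF ab] qA12 by blast
    ultimately show ?thesis using A12_A21_0 by blast
  qed
  have "D (scl M (scl (1/M) x)) (scl M (scl (1/M) y)) = 0"
    using key[OF A_scl(2)[OF x] A_scl(2)[OF y]] .
  thus ?thesis using M_nz by simp
qed

lemma C6q: "A21 x \<Longrightarrow> A21 y \<Longrightarrow> D x y = 0"
  using derp.C6[OF derp_q] qA12 by blast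

lemma C7: assumes x: "A11 x" and y: "A11 y" shows "D x y = 0"
proof -
  let ?D = "D x y"
  have "scl M (J q ?D) = 0" using E2[of q x y] Jq(1)[OF x] Jq(1)[OF y] by simp
  hence "J q ?D = 0" using M_nz by simp
  hence e1: "p \<odot> ?D + ?D \<odot> p = ?D + ?D" unfolding J_def' by (simp add: sp algebra_simps)
  have "p \<odot> (p \<odot> ?D + ?D \<odot> p) = p \<odot> (?D + ?D)" using e1 by simp
  hence e2: "p \<odot> (?D \<odot> p) = p \<odot> ?D" by (simp add: addR)
  have "(p \<odot> ?D + ?D \<odot> p) \<odot> p = (?D + ?D) \<odot> p" using e1 by simp
  hence e3: "(p \<odot> ?D) \<odot> p = ?D \<odot> p" by (simp add: addL)
  have e4: "p \<odot> ?D = ?D \<odot> p"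
  proof -
    have "p \<odot> ?D = p \<odot> (?D \<odot> p)" using e2 by simp
    also have "\<dots> = (p \<odot> ?D) \<odot> p" using pxp[of ?D] by simp
    also have "\<dots> = ?D \<odot> p" by (rule e3)
    finally show ?thesis .
  qed
  have e5: "p \<odot> ?D = ?D"
  proof (rule dbl_cancel)
    show "p \<odot> ?D + p \<odot> ?D = ?D + ?D" using e1 e4 by simp
  qed
  have DA: "A11 ?D" unfolding A11_def using e4 e5 by simp
  have Da: "?D \<odot> a = 0" if a: "A12 a" for a
  proof -
    let ?c = "st a"
    have c: "A21 ?c" using A_st a by auto
    have sc: "st ?c = a" by simp
    let ?K = "scl M"
    have cx: "A21 (?c \<odot> x)" "A21 (?c \<odot> y)" using m21_11 c x y by auto
    have xc: "A12 (x \<odot> a)" "A12 (y \<odot> a)" using m11_12 a x y by auto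
    have Jcx: "J ?c x = ?c \<odot> x + x \<odot> a" "J ?c y = ?c \<odot> y + y \<odot> a" unfolding J_def' by simp_all
    have f1: "\<Phi> (?K (J ?c x)) = \<Phi> (?K (x \<odot> a)) + \<Phi> (?K (?c \<odot> x))"
      using DPhi[OF C3[OF A_scl(2)[OF xc(1)] A_scl(3)[OF cx(1)]]] unfolding Jcx
      by (simp add: scl_simps add.commute)
    have f2: "\<Phi> (?K (J ?c y)) = \<Phi> (?K (y \<odot> a)) + \<Phi> (?K (?c \<odot> y))"
      using DPhi[OF C3[OF A_scl(2)[OF xc(2)] A_scl(3)[OF cx(2)]]] unfolding Jcx
      by (simp add: scl_simps add.commute)
    have f3: "\<Phi> (?K (J ?c x) + ?K (J ?c y)) = \<Phi> (?K (x \<odot> a)) + \<Phi> (?K (y \<odot> a)) + \<Phi> (?K (?c \<odot> x)) + \<Phi> (?K (?c \<odot> y))"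
    proof -
      have "?K (J ?c x) + ?K (J ?c y) = (?K (x \<odot> a) + ?K (y \<odot> a)) + (?K (?c \<odot> x) + ?K (?c \<odot> y))"
        unfolding Jcx by (simp add: scl_simps algebra_simps)
      moreover have "\<Phi> ((?K (x \<odot> a) + ?K (y \<odot> a)) + (?K (?c \<odot> x) + ?K (?c \<odot> y)))
          = \<Phi> (?K (x \<odot> a) + ?K (y \<odot> a)) + \<Phi> (?K (?c \<odot> x) + ?K (?c \<odot> y))"
        by (rule DPhi[OF C3]) (intro A_add A_scl xc cx)+
      moreover have "\<Phi> (?K (x \<odot> a) + ?K (y \<odot> a)) = \<Phi> (?K (x \<odot> a)) + \<Phi> (?K (y \<odot> a))"
        by (rule DPhi[OF C6]) (intro A_scl xc)+
      moreover have "\<Phi> (?K (?c \<odot> x) + ?K (?c \<odot> y)) = \<Phi> (?K (?c \<odot> x)) + \<Phi> (?K (?c \<odot> y))"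
        by (rule DPhi[OF C6q]) (intro A_scl cx)+
      ultimately show ?thesis by (simp add: algebra_simps)
    qed
    have "scl M (J ?c ?D) = 0" using E2[of ?c x y] f1 f2 f3 unfolding D_def by (simp add: algebra_simps)
    hence "J ?c ?D = 0" using M_nz by simp
    hence "?c \<odot> ?D + ?D \<odot> a = 0" unfolding J_def' by simp
    moreover have "A21 (?c \<odot> ?D)" using m21_11[OF c DA] .
    moreover have "A12 (?D \<odot> a)" using m11_12[OF DA a] .
    ultimately show ?thesis using A12_A21_0[of "?D \<odot> a" "?c \<odot> ?D"] by (simp add: add.commute)
  qed
  have pr: "(?D \<odot> z) \<odot> q = 0" for z
  proof -
    have zs: "z = pi11 z + pi12 z + pi21 z + pi22 z" using pi_sum by simp
    have "?D \<odot> z = ?D \<odot> pi11 z + ?D \<odot> pi12 z + ?D \<odot> pi21 z + ?D \<odot> pi22 z"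
      by (subst zs) (simp add: addR)
    hence "?D \<odot> z = ?D \<odot> pi11 z"
      using Da[OF A12_pi] m11_21[OF DA A21_pi] m11_22[OF DA A22_pi] by simp
    moreover have "A11 (?D \<odot> pi11 z)" using m11_11[OF DA A11_pi] .
    ultimately show ?thesis unfolding A11_def by simp
  qed
  have "?D = 0 \<or> q = 0" by (rule prime) (rule pr)
  thus ?thesis using p1 by auto
qed

lemma C7q: "A22 x \<Longrightarrow> A22 y \<Longrightarrow> D x y = 0"
  using derp.C7[OF derp_q] qA11 by blast

lemma additive: "\<Phi> (x + y) = \<Phi> x + \<Phi> y"
proof -
  have "\<Phi> (x + y) = \<Phi> (pi11 x + pi11 y) + \<Phi> (pi12 x + pi12 y) + \<Phi> (pi21 x + pi21 y) + \<Phi> (pi22 x + pi22 y)"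
    using C4[of "x + y"] by (simp add: pi_add)
  also have "\<dots> = (\<Phi> (pi11 x) + \<Phi> (pi11 y)) + (\<Phi> (pi12 x) + \<Phi> (pi12 y)) + (\<Phi> (pi21 x) + \<Phi> (pi21 y))
     + (\<Phi> (pi22 x) + \<Phi> (pi22 y))"
    using DPhi[OF C7[OF A11_pi A11_pi]] DPhi[OF C6[OF A12_pi A12_pi]]
      DPhi[OF C6q[OF A21_pi A21_pi]] DPhi[OF C7q[OF A22_pi A22_pi]] by simp
  also have "\<dots> = \<Phi> x + \<Phi> y" using C4[of x] C4[of y] by (simp add: algebra_simps)
  finally show ?thesis .
qed

end


locale fin = derp +
  fixes m :: nat and \<kappa> :: complex
  assumes Mm: "M = of_nat m"
    and W1: "W + st W = scl \<kappa> (\<Phi> one + st (\<Phi> one))"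
    and kreal: "cnj \<kappa> = \<kappa>" and Mk: "M + 2 * \<kappa> \<noteq> 0"
    and W2: "st (\<Phi> one) = - \<Phi> one \<Longrightarrow> (\<And>x. J (\<Phi> one) x = 0) \<Longrightarrow> J W a = 0"
begin

interpretation V: vector_space scl by (rule vs)

lemma fin_q: "fin scl mul st one \<Phi> M W q m \<kappa>"
  unfolding fin_def fin_axioms_def using derp_q Mm W1 kreal Mk W2 by blast

lemma Phi_neg: "\<Phi> (- x) = - \<Phi> x"
  using additive[of x "- x"] by (simp add: eq_neg_iff_add_eq_0 add.commute)
lemma Phi_diff: "\<Phi> (x - y) = \<Phi> x - \<Phi> y"
  using additive[of x "- y"] Phi_neg by simp

lemma Phi_nat: "\<Phi> (scl (of_nat k) z) = scl (of_nat k) (\<Phi> z)"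
proof (induction k)
  case 0 then show ?case by simp
next
  case (Suc k)
  have "scl (of_nat (Suc k)) z = scl (of_nat k) z + z" by (simp add: scl_simps)
  moreover have "scl (of_nat (Suc k)) (\<Phi> z) = scl (of_nat k) (\<Phi> z) + \<Phi> z" by (simp add: scl_simps)
  ultimately show ?case using Suc additive by simp
qed

lemma PhiM: "\<Phi> (scl M z) = scl M (\<Phi> z)" using Phi_nat Mm by simp

lemma Jpre: "scl M (\<Phi> (J a b)) = scl M (J (\<Phi> a) b) + scl M (J a (\<Phi> b)) + J (J W a) b"
  using H[of a b] PhiM by simp

abbreviation "d \<equiv> \<Phi> one"

lemma d_facts: "st d = - d" "\<And>x. J d x = 0"
proof -
  have e: "J (scl M d + (W + st W)) x = 0" for x
  proof -
    have "scl M (\<Phi> x + \<Phi> x) = scl M (J d x) + scl M (\<Phi> x + \<Phi> x) + J (W + st W) x"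
      using Jpre[of one x] by (simp add: J_oneL J_oneR additive)
    hence "scl M (J d x) + J (W + st W) x = 0" by (simp add: algebra_simps)
    thus ?thesis using J_sclL[OF M_real] by (simp add: J_addL)
  qed
  let ?s = "d + st d"
  have "J (scl M d + (W + st W)) one = 0" by (rule e)
  hence "scl M ?s + scl \<kappa> ?s + scl \<kappa> ?s = 0"
    unfolding J_oneR using W1 M_real kreal
    by (simp add: st_add st_scl V.scale_right_distrib algebra_simps)
  moreover have "scl (M + 2 * \<kappa>) ?s = scl M ?s + scl \<kappa> ?s + scl \<kappa> ?s"
    by (simp only: mult_2 V.scale_left_distrib add.assoc)
  ultimately have "scl (M + 2 * \<kappa>) ?s = 0" by simp
  hence s0: "?s = 0" using Mk by simp
  thus sd: "st d = - d" by (simp add: eq_neg_iff_add_eq_0 add.commute)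
  have WW: "W + st W = 0" using W1 s0 by simp
  fix x
  have "J (scl M d) x = 0" using e[of x] WW by simp
  thus "J d x = 0" using J_sclL[OF M_real] M_nz by simp
qed

lemma JW: "J W a = 0" using W2 d_facts by blast

lemma Jder: "\<Phi> (J a b) = J (\<Phi> a) b + J a (\<Phi> b)"
  using Jpre[of a b] JW M_nz by (simp add: scl_simps[symmetric])

lemma d_central: "d \<odot> x = x \<odot> d"
  using d_facts(2)[of x] d_facts(1) unfolding J_def' by simp

lemma st_central: "(\<And>y. c \<odot> y = y \<odot> c) \<Longrightarrow> st c \<odot> x = x \<odot> st c"
proof -
  assume c: "\<And>y. c \<odot> y = y \<odot> c"
  have "st c \<odot> x = st (st x \<odot> c)" by (simp add: st_mul)
  also have "\<dots> = st (c \<odot> st x)" using c by simp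
  also have "\<dots> = x \<odot> st c" by (simp add: st_mul)
  finally show ?thesis .
qed

abbreviation "z \<equiv> \<Phi> (scl \<i> one)"

lemma Jiota: "J (scl \<i> one) y = 0"
  unfolding J_def' by (simp add: st_scl sclL sclR)

lemma z_facts: "st z = - z" "z \<odot> x = x \<odot> z"
proof -
  have Jz: "J z y = 0" for y using Jder[of "scl \<i> one" y] Jiota by simp
  have "z + st z = 0" using Jz[of one] unfolding J_oneR .
  thus sz: "st z = - z" by (simp add: eq_neg_iff_add_eq_0 add.commute)
  show "z \<odot> x = x \<odot> z" using Jz[of x] sz unfolding J_def' by simp
qed

definition "wv = z - scl \<i> d"

lemma w_central: "wv \<odot> x = x \<odot> wv"
  using z_facts(2)[of x] d_central[of x] unfolding wv_def by (simp add: sclL sclR)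

lemma stw_central: "st wv \<odot> x = x \<odot> st wv"
  by (rule st_central) (rule w_central)

lemma F6: "\<Phi> (st y) = st (\<Phi> y) + d \<odot> y + d \<odot> st y"
proof -
  have "\<Phi> y + \<Phi> (st y) = \<Phi> y + st (\<Phi> y) + (d \<odot> y + d \<odot> st y)"
    using Jder[of y one] d_central[of y] by (simp add: J_oneR J_def'[of y d] additive)
  thus ?thesis by (simp add: algebra_simps)
qed

lemma F7: "\<Phi> (scl \<i> (y + st y)) = scl \<i> (\<Phi> (y + st y)) + wv \<odot> (y + st y)"
proof -
  have "J y (scl \<i> one) = scl \<i> (y + st y)" unfolding J_def' by (simp add: sclL sclR scl_simps)
  moreover have "J (\<Phi> y) (scl \<i> one) = scl \<i> (\<Phi> y + st (\<Phi> y))" unfolding J_def' by (simp add: sclL sclR scl_simps)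
  moreover have "J y z = z \<odot> y + z \<odot> st y" unfolding J_def' using z_facts(2)[of y] by simp
  ultimately have "\<Phi> (scl \<i> (y + st y)) = scl \<i> (\<Phi> y + st (\<Phi> y)) + (z \<odot> y + z \<odot> st y)"
    using Jder[of y "scl \<i> one"] by simp
  also have "\<Phi> y + st (\<Phi> y) = \<Phi> (y + st y) - (d \<odot> y + d \<odot> st y)"
    using F6[of y] by (simp add: additive algebra_simps)
  finally show ?thesis unfolding wv_def by (simp add: sclL addR addL scl_simps algebra_simps)
qed

lemma F8: "\<Phi> (scl \<i> u) = scl \<i> (\<Phi> u) + wv \<odot> st u"
proof -
  let ?A = "\<Phi> (scl \<i> u)" and ?B = "\<Phi> (scl \<i> (st u))" and ?P = "\<Phi> u" and ?Q = "\<Phi> (st u)"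
    and ?X = "wv \<odot> u" and ?Y = "wv \<odot> st u"
  have h1: "?A + ?B = scl \<i> ?P + scl \<i> ?Q + ?X + ?Y"
    using F7[of u] by (simp add: additive scl_simps addR algebra_simps)
  have h2: "?P - ?Q = scl \<i> (- ?A + ?B) + scl (- \<i>) ?X + scl \<i> ?Y"
  proof -
    have e: "scl \<i> (scl (- \<i>) u + st (scl (- \<i>) u)) = u - st u" by (simp add: st_scl scl_simps)
    have "\<Phi> (u - st u) = scl \<i> (\<Phi> (scl (- \<i>) u + st (scl (- \<i>) u))) + wv \<odot> (scl (- \<i>) u + st (scl (- \<i>) u))"
      using F7[of "scl (- \<i>) u"] unfolding e .
    moreover have "\<Phi> (scl (- \<i>) u) = - ?A" using Phi_neg[of "scl \<i> u"] by (simp add: scl_simps)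
    ultimately show ?thesis by (simp add: Phi_diff additive st_scl scl_simps addR sclR)
  qed
  have h2s: "?A - ?B + ?X - ?Y = scl \<i> ?P - scl \<i> ?Q"
    using arg_cong[OF h2, of "scl \<i>"] by (simp add: scl_simps algebra_simps)
  have "?A + ?A = (?A + ?B) + (?A - ?B + ?X - ?Y) - ?X + ?Y" by (simp add: algebra_simps)
  also have "\<dots> = (scl \<i> ?P + scl \<i> ?Q + ?X + ?Y) + (scl \<i> ?P - scl \<i> ?Q) - ?X + ?Y"
    by (simp only: h1 h2s)
  also have "\<dots> = (scl \<i> ?P + ?Y) + (scl \<i> ?P + ?Y)" by (simp add: algebra_simps)
  finally show ?thesis by (rule dbl_cancel)
qed

lemma pi12_scl: "pi12 (scl c v) = scl c (pi12 v)"
  unfolding pi12_def by (simp add: sclL sclR scl_simps)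
lemma pi12_addd: "pi12 (u + v) = pi12 u + pi12 v" by (rule pi_add(2))
lemma pi12_neg: "pi12 (- v) = - pi12 v" unfolding pi12_def by (simp add: algebra_simps)
lemma pi12_diff: "pi12 (u - v) = pi12 u - pi12 v" unfolding pi12_def by (simp add: algebra_simps)
lemma pi12_yp: "pi12 (y \<odot> p) = 0" unfolding pi12_def by simp
lemma pi12_ayp: "A12 a \<Longrightarrow> pi12 (a \<odot> (y \<odot> p)) = 0"
proof -
  assume a: "A12 a"
  have z: "a \<odot> (p \<odot> (y \<odot> p)) = 0"
    using m12_11[OF a, of "p \<odot> (y \<odot> p)"] pxp[of y] A11_pi[of y] unfolding pi11_def by simp
  have "p \<odot> (a \<odot> (y \<odot> p)) = a \<odot> (y \<odot> p)" using pL[of p a "y \<odot> p"] a z unfolding A12_def by simp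
  moreover have "(a \<odot> (y \<odot> p)) \<odot> p = a \<odot> (y \<odot> p)" using pR[of a "y \<odot> p" p] a z unfolding A12_def by simp
  ultimately show ?thesis unfolding pi12_def by simp
qed
lemma pi12_apy: "A12 a \<Longrightarrow> pi12 (a \<odot> (p \<odot> y)) = 0"
proof -
  assume a: "A12 a"
  have "p \<odot> (a \<odot> (p \<odot> y)) = 0" using pL[of p a "p \<odot> y"] a unfolding A12_def by simp
  thus ?thesis unfolding pi12_def by simp
qed

lemma F10: assumes a: "A12 a" shows "wv \<odot> a = 0"
proof -
  let ?f = "\<Phi> p" and ?P = "\<Phi> a"
  have sa: "A21 (st a)" using A_st a by auto
  have pdp: "p \<odot> (d \<odot> p) = d \<odot> p"
  proof -
    have "p \<odot> (d \<odot> p) = (p \<odot> d) \<odot> p" using central_nucleus(2)[of d p p] d_central by simp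
    also have "\<dots> = (d \<odot> p) \<odot> p" using d_central by simp
    also have "\<dots> = d \<odot> p" by simp
    finally show ?thesis .
  qed
  have stf: "st ?f = ?f - (d \<odot> p + d \<odot> p)" using F6[of p] sp by (simp add: algebra_simps)
  have feq: "?f = ?f \<odot> p + p \<odot> ?f - d \<odot> p"
  proof (rule dbl_cancel)
    have "J p p = p + p" unfolding J_def' by (simp add: sp pp)
    hence "?f + ?f = J ?f p + J p ?f" using Jder[of p p] additive by simp
    also have "\<dots> = ?f \<odot> p + p \<odot> st ?f + p \<odot> ?f + ?f \<odot> p" unfolding J_def' by (simp add: sp)
    finally show "?f + ?f = (?f \<odot> p + p \<odot> ?f - d \<odot> p) + (?f \<odot> p + p \<odot> ?f - d \<odot> p)"
      unfolding stf using pdp by (simp add: addR algebra_simps)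
  qed
  have i1: "?P = ?f \<odot> a + a \<odot> st ?f + p \<odot> ?P + ?P \<odot> p"
    using Jder[of p a] Jp(2)[OF a] unfolding J_def'[of ?f a] J_def'[of p ?P] by (simp add: sp add.assoc)
  have Jwp: "J (wv \<odot> p) a = wv \<odot> a"
  proof -
    have "(wv \<odot> p) \<odot> a = wv \<odot> a" using central_nucleus(3)[of wv p a] w_central a unfolding A12_def by simp
    moreover have "a \<odot> st (wv \<odot> p) = 0"
    proof -
      have "st (wv \<odot> p) = p \<odot> st wv" by (simp add: st_mul sp)
      hence "a \<odot> st (wv \<odot> p) = (a \<odot> p) \<odot> st wv" using central_nucleus(1)[of "st wv" a p] stw_central by simp
      thus ?thesis using a unfolding A12_def by simp
    qed
    ultimately show ?thesis unfolding J_def' by simp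
  qed
  have i2: "scl \<i> ?P + wv \<odot> st a = scl \<i> (?f \<odot> a) - scl \<i> (a \<odot> st ?f) + wv \<odot> a + scl \<i> (p \<odot> ?P) - scl \<i> (?P \<odot> p)"
  proof -
    have "\<Phi> (scl \<i> a) = J (\<Phi> (scl \<i> p)) a + J (scl \<i> p) ?P" using Jder[of "scl \<i> p" a] Jip(2)[OF a] by simp
    moreover have "\<Phi> (scl \<i> a) = scl \<i> ?P + wv \<odot> st a" by (rule F8)
    moreover have "\<Phi> (scl \<i> p) = scl \<i> ?f + wv \<odot> p" using F8[of p] sp by simp
    moreover have "J (scl \<i> ?f) a = scl \<i> (?f \<odot> a) - scl \<i> (a \<odot> st ?f)"
      unfolding J_def' by (simp add: st_scl sclL sclR scl_simps)
    moreover have "J (scl \<i> p) ?P = scl \<i> (p \<odot> ?P) - scl \<i> (?P \<odot> p)"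
      unfolding J_def' by (simp add: st_scl sclL sclR sp scl_simps)
    ultimately show ?thesis using Jwp by (simp add: J_addL algebra_simps)
  qed
  have key: "wv \<odot> a = wv \<odot> st a + scl \<i> (a \<odot> st ?f + a \<odot> st ?f + ?P \<odot> p + ?P \<odot> p)"
  proof -
    have "scl \<i> ?P = scl \<i> (?f \<odot> a) + scl \<i> (a \<odot> st ?f) + scl \<i> (p \<odot> ?P) + scl \<i> (?P \<odot> p)"
      using arg_cong[OF i1, of "scl \<i>"] by (simp add: scl_simps)
    with i2 show ?thesis by (simp add: scl_simps algebra_simps)
  qed
  have p1: "pi12 (wv \<odot> a) = wv \<odot> a"
  proof -
    have "p \<odot> (wv \<odot> a) = wv \<odot> a"
      using central_nucleus(2)[of wv p a] central_nucleus(3)[of wv p a] w_central a unfolding A12_def by simp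
    moreover have "(wv \<odot> a) \<odot> p = 0" using central_nucleus(3)[of wv a p] w_central a unfolding A12_def by simp
    ultimately show ?thesis unfolding pi12_def by simp
  qed
  have p2: "pi12 (wv \<odot> st a) = 0"
  proof -
    have "p \<odot> (wv \<odot> st a) = 0"
      using central_nucleus(2)[of wv p "st a"] central_nucleus(3)[of wv p "st a"] w_central sa unfolding A21_def by simp
    thus ?thesis unfolding pi12_def by simp
  qed
  have p3: "pi12 (a \<odot> st ?f) = 0"
  proof -
    have adp: "a \<odot> (d \<odot> p) = 0"
    proof -
      have "a \<odot> (d \<odot> p) = (a \<odot> d) \<odot> p" using central_nucleus(2)[of d a p] d_central by simp
      also have "\<dots> = d \<odot> (a \<odot> p)" using central_nucleus(3)[of d a p] d_central by simp
      finally show ?thesis using a unfolding A12_def by simp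
    qed
    have "st ?f = ?f \<odot> p + p \<odot> ?f - d \<odot> p - (d \<odot> p + d \<odot> p)" using stf feq by simp
    hence "a \<odot> st ?f = a \<odot> (?f \<odot> p) + a \<odot> (p \<odot> ?f)" using adp by (simp add: addR)
    thus ?thesis using pi12_ayp[OF a] pi12_apy[OF a] by (simp add: pi_add)
  qed
  have "pi12 (wv \<odot> a) = pi12 (wv \<odot> st a) + scl \<i> (pi12 (a \<odot> st ?f) + pi12 (a \<odot> st ?f) + pi12 (?P \<odot> p) + pi12 (?P \<odot> p))"
    using arg_cong[OF key, of pi12] by (simp add: pi_add pi12_scl)
  thus ?thesis using p1 p2 p3 pi12_yp by simp
qed

lemma wp0: "wv \<odot> p = 0"
proof -
  have "((wv \<odot> p) \<odot> x) \<odot> q = 0" for x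
  proof -
    have "((wv \<odot> p) \<odot> x) \<odot> q = (wv \<odot> (p \<odot> x)) \<odot> q" using central_nucleus(3)[of wv p x] w_central by simp
    also have "\<dots> = wv \<odot> ((p \<odot> x) \<odot> q)" using central_nucleus(3)[of wv "p \<odot> x" q] w_central by simp
    also have "(p \<odot> x) \<odot> q = pi12 x" unfolding pi12_def by simp
    finally show ?thesis using F10[OF A12_pi] by simp
  qed
  hence "wv \<odot> p = 0 \<or> q = 0" by (intro prime)
  thus ?thesis using p1 by auto
qed

lemma w0: "wv = 0"
proof -
  have "wv \<odot> q = 0" using fin.wp0[OF fin_q] .
  hence "wv \<odot> p + wv \<odot> q = 0" using wp0 by simp
  hence "wv \<odot> one = 0" by (simp add: diffR)
  thus ?thesis by simp
qed

lemma d0: "d = 0"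
proof -
  have "st wv = - z - scl \<i> d" using z_facts(1) d_facts(1) unfolding wv_def by (simp add: st_scl scl_simps)
  hence a: "wv + st wv = - (scl \<i> d + scl \<i> d)" unfolding wv_def by simp
  have b: "wv + st wv = 0" using w0 by simp
  have "- (scl \<i> d + scl \<i> d) = 0" by (metis a b)
  hence "scl \<i> d + scl \<i> d = 0" by (simp only: neg_equal_0_iff_equal)
  hence "scl \<i> d = 0" by (rule dbl0)
  thus ?thesis by simp
qed

lemma Phi_st: "\<Phi> (st y) = st (\<Phi> y)" using F6[of y] d0 by simp
lemma Phi_i: "\<Phi> (scl \<i> u) = scl \<i> (\<Phi> u)" using F8[of u] w0 by simp

lemma Phi_mi: "\<Phi> (scl (- \<i>) u) = scl (- \<i>) (\<Phi> u)"
  using Phi_neg[of "scl \<i> u"] Phi_i[of u] by (simp add: scl_simps)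

lemma two_prod: "J x y + scl (- \<i>) (J (scl \<i> x) y) = x \<odot> y + x \<odot> y"
  unfolding J_def' by (simp add: st_scl sclL sclR scl_simps)

lemma Phi_mul: "\<Phi> (x \<odot> y) = \<Phi> x \<odot> y + x \<odot> \<Phi> y"
proof (rule dbl_cancel)
  have "\<Phi> (x \<odot> y) + \<Phi> (x \<odot> y) = \<Phi> (J x y + scl (- \<i>) (J (scl \<i> x) y))"
    using two_prod[of x y] additive by simp
  also have "\<dots> = (J (\<Phi> x) y + J x (\<Phi> y)) + scl (- \<i>) (J (scl \<i> (\<Phi> x)) y + J (scl \<i> x) (\<Phi> y))"
    using Jder[of x y] Jder[of "scl \<i> x" y] Phi_i[of x] by (simp add: additive Phi_diff Phi_neg Phi_i scl_simps)
  also have "\<dots> = (J (\<Phi> x) y + scl (- \<i>) (J (scl \<i> (\<Phi> x)) y)) + (J x (\<Phi> y) + scl (- \<i>) (J (scl \<i> x) (\<Phi> y)))"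
    by (simp add: scl_simps algebra_simps)
  also have "\<dots> = (\<Phi> x \<odot> y + x \<odot> \<Phi> y) + (\<Phi> x \<odot> y + x \<odot> \<Phi> y)"
    unfolding two_prod by (simp add: algebra_simps)
  finally show "\<Phi> (x \<odot> y) + \<Phi> (x \<odot> y) = (\<Phi> x \<odot> y + x \<odot> \<Phi> y) + (\<Phi> x \<odot> y + x \<odot> \<Phi> y)" .
qed

lemma star_der: "star_derivation mul st \<Phi>"
  unfolding star_derivation_def using additive Phi_mul Phi_st by blast

end


context alg begin

interpretation V: vector_space scl by (rule vs)

lemma scl_0R: "scl c 0 = 0" by (rule V.scale_zero_right)

lemma scl_2: "scl (2 * c) x = scl c x + scl c x" by (simp only: mult_2 V.scale_left_distrib)

lemma fo_Suc: "foldl J x (replicate (Suc j) one) = foldl J (x + st x) (replicate j one)"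
  by (simp add: J_oneR)

lemma g_sa: "st x = x \<Longrightarrow> foldl J x (replicate j one) = scl (of_nat (2^j)) x"
proof (induction j arbitrary: x)
  case 0 then show ?case by simp
next
  case (Suc j)
  have "st (x + x) = x + x" using Suc.prems by (simp add: st_add)
  hence "foldl J (x + x) (replicate j one) = scl (of_nat (2^j)) (x + x)" by (rule Suc.IH)
  moreover have "scl (of_nat (2^j)) (x + x) = scl (of_nat (2^Suc j)) x" by (simp add: scl_simps scl_2)
  ultimately show ?case unfolding fo_Suc using Suc.prems by simp
qed

lemma g_zero: "foldl J 0 (replicate j one) = 0"
  by (induction j) (simp_all add: J_oneR)

lemma g_sum: "foldl J x (replicate j one) + st (foldl J x (replicate j one)) = scl (of_nat (2^j)) (x + st x)"
proof (induction j arbitrary: x)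
  case 0 then show ?case by simp
next
  case (Suc j)
  have "foldl J (x + st x) (replicate j one) + st (foldl J (x + st x) (replicate j one))
     = scl (of_nat (2^j)) ((x + st x) + st (x + st x))" by (rule Suc.IH)
  also have "\<dots> = scl (of_nat (2^Suc j)) (x + st x)" by (simp add: st_add scl_simps scl_2 algebra_simps)
  finally show ?case unfolding fo_Suc .
qed

lemma g_skew: "st x = - x \<Longrightarrow> foldl J x (replicate (Suc j) one) = 0"
  unfolding fo_Suc by (simp add: g_zero)

lemma jbl_main: "jbullet_list mul st (replicate N one @ [a, b]) = scl (of_nat (2^N)) (J a b)"
proof (cases N)
  case 0 then show ?thesis by (simp add: jbullet_list_def)
next
  case (Suc N')
  have "jbullet_list mul st (replicate N one @ [a, b]) = J (J (foldl J one (replicate N' one)) a) b"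
    unfolding jbullet_list_def Suc by simp
  also have "foldl J one (replicate N' one) = scl (of_nat (2^N')) one" by (rule g_sa) simp
  also have "J (J (scl (of_nat (2^N')) one) a) b = scl (of_nat (2^N)) (J a b)"
    unfolding Suc by (simp add: J_sclL J_oneL J_addL scl_simps scl_2)
  finally show ?thesis .
qed

lemma rep_upd: "k < N \<Longrightarrow> (replicate N one)[k := d] = replicate k one @ d # replicate (N - 1 - k) one"
proof -
  assume k: "k < N"
  have "replicate N one = replicate k one @ one # replicate (N - 1 - k) one"
    using k by (simp add: replicate_add[symmetric] flip: replicate_Suc)
  thus ?thesis by (simp add: list_update_append)
qed

lemma jbl_k: "k < N \<Longrightarrow> jbullet_list mul st ((replicate N one @ [a, b])[k := d])
   = J (J (foldl J (scl (of_nat (2^k)) d) (replicate (N - 1 - k) one)) a) b"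
proof -
  assume k: "k < N"
  have e: "(replicate N one @ [a, b])[k := d] = replicate k one @ d # replicate (N - 1 - k) one @ [a, b]"
    using k rep_upd[OF k] by (simp add: list_update_append)
  show ?thesis
  proof (cases k)
    case 0 then show ?thesis unfolding e jbullet_list_def by simp
  next
    case (Suc k')
    have "jbullet_list mul st ((replicate N one @ [a, b])[k := d])
        = J (J (foldl J (J (foldl J one (replicate k' one)) d) (replicate (N - 1 - k) one)) a) b"
      unfolding e jbullet_list_def using Suc by simp
    also have "foldl J one (replicate k' one) = scl (of_nat (2^k')) one" by (rule g_sa) simp
    also have "J (scl (of_nat (2^k')) one) d = scl (of_nat (2^k)) d"
      unfolding Suc by (simp add: J_sclL J_oneL scl_simps scl_2)
    finally show ?thesis .
  qed
qed

lemma J_sumL: "J (\<Sum>k<(N::nat). f k) b = (\<Sum>k<N. J (f k) b)"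
  by (induction N) (simp_all add: J_addL)
lemma st_sum: "st (\<Sum>k<(N::nat). f k) = (\<Sum>k<N. st (f k))"
  by (induction N) (simp_all add: st_add)
lemma scl_sum_const: "(\<Sum>k<(N::nat). scl c v) = scl (of_nat N * c) v"
  by (induction N) (simp_all add: scl_simps algebra_simps)

end


theorem corollary2:
  fixes scl :: "complex \<Rightarrow> 'a::ab_group_add \<Rightarrow> 'a"
    and mul :: "'a \<Rightarrow> 'a \<Rightarrow> 'a"
    and st :: "'a \<Rightarrow> 'a"
    and one :: 'a
    and e :: 'a
    and \<Phi> :: "'a \<Rightarrow> 'a"
    and n :: nat
  assumes alg: "complex_star_algebra scl mul st"
    and alt: "alternative mul"
    and prime: "prime_algebra mul"
    and unit: "unit_of mul one"
    and n2: "n \<ge> 2"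
    and e_idem: "mul e e = e"
    and e_sym: "st e = e"
    and e_nz: "e \<noteq> 0"
    and e_ne1: "e \<noteq> one"
    and hyp: "\<And>a b. let xs = replicate (n - 2) one @ [a, b] in
               \<Phi> (jbullet_list mul st xs) =
               (\<Sum>k<n. jbullet_list mul st (xs[k := \<Phi> (xs ! k)]))"
  shows "star_derivation mul st \<Phi>"
proof -
  have AX: "alg scl mul st one"
    using alg alt prime unit
    unfolding alg_def complex_star_algebra_def complex_algebra_def involution_def alternative_def
      prime_algebra_def unit_of_def
    by (intro conjI allI impI; (elim conjE)?; (simp; fail)?; blast)
  interpret A: alg scl mul st one by (rule AX)
  define N where "N = n - 2"
  have nN: "n = Suc (Suc N)" using n2 unfolding N_def by simp
  define d where "d = \<Phi> one"
  define zk where "zk k = foldl (jbullet mul st) (scl (of_nat (2^k)) d) (replicate (N - 1 - k) one)" for k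
  define W where "W = (\<Sum>k<N. zk k)"
  define M where "M = (of_nat (2^N) :: complex)"
  define \<kappa> where "\<kappa> = (of_nat (N * 2^(N-1)) :: complex)"
  have H: "\<Phi> (scl M (jbullet mul st a b)) = scl M (jbullet mul st (\<Phi> a) b)
     + scl M (jbullet mul st a (\<Phi> b)) + jbullet mul st (jbullet mul st W a) b" for a b
  proof -
    let ?xs = "replicate N one @ [a, b]"
    have h: "\<Phi> (jbullet_list mul st ?xs) = (\<Sum>k<n. jbullet_list mul st (?xs[k := \<Phi> (?xs ! k)]))"
      using hyp[of a b] unfolding N_def Let_def .
    have l: "jbullet_list mul st ?xs = scl M (jbullet mul st a b)" unfolding M_def by (rule A.jbl_main)
    have t1: "jbullet_list mul st (?xs[N := \<Phi> (?xs ! N)]) = scl M (jbullet mul st (\<Phi> a) b)"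
    proof -
      have "?xs[N := \<Phi> (?xs ! N)] = replicate N one @ [\<Phi> a, b]" by (simp add: list_update_append nth_append)
      thus ?thesis unfolding M_def using A.jbl_main by simp
    qed
    have t2: "jbullet_list mul st (?xs[Suc N := \<Phi> (?xs ! Suc N)]) = scl M (jbullet mul st a (\<Phi> b))"
    proof -
      have "?xs[Suc N := \<Phi> (?xs ! Suc N)] = replicate N one @ [a, \<Phi> b]" by (simp add: list_update_append nth_append)
      thus ?thesis unfolding M_def using A.jbl_main by simp
    qed
    have t3: "(\<Sum>k<N. jbullet_list mul st (?xs[k := \<Phi> (?xs ! k)])) = jbullet mul st (jbullet mul st W a) b"
    proof -
      have "(\<Sum>k<N. jbullet_list mul st (?xs[k := \<Phi> (?xs ! k)]))
          = (\<Sum>k<N. jbullet mul st (jbullet mul st (zk k) a) b)"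
      proof (rule sum.cong)
        fix k assume "k \<in> {..<N}"
        hence k: "k < N" by simp
        have "?xs ! k = one" using k by (simp add: nth_append)
        thus "jbullet_list mul st (?xs[k := \<Phi> (?xs ! k)]) = jbullet mul st (jbullet mul st (zk k) a) b"
          using A.jbl_k[OF k, of a b d] unfolding zk_def d_def by simp
      qed simp
      also have "\<dots> = jbullet mul st (jbullet mul st W a) b" unfolding W_def by (simp add: A.J_sumL)
      finally show ?thesis .
    qed
    show ?thesis using h l t1 t2 t3 unfolding nN by (simp add: algebra_simps)
  qed
  have W1: "W + st W = scl \<kappa> (d + st d)"
  proof -
    have "W + st W = (\<Sum>k<N. zk k + st (zk k))" unfolding W_def by (simp add: A.st_sum sum.distrib)
    also have "\<dots> = (\<Sum>k<N. scl (of_nat (2^(N-1))) (d + st d))"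
    proof (rule sum.cong)
      fix k assume "k \<in> {..<N}"
      hence k: "k < N" by simp
      have "zk k + st (zk k) = scl (of_nat (2^(N-1-k))) (scl (of_nat (2^k)) d + st (scl (of_nat (2^k)) d))"
        unfolding zk_def by (rule A.g_sum)
      also have "\<dots> = scl (of_nat (2^(N-1-k) * 2^k)) (d + st d)"
        by (simp add: A.st_scl A.scl_simps)
      also have "2^(N-1-k) * 2^k = (2::nat)^(N-1)" using k by (simp flip: power_add)
      finally show "zk k + st (zk k) = scl (of_nat (2^(N-1))) (d + st d)" .
    qed simp
    also have "\<dots> = scl \<kappa> (d + st d)" unfolding \<kappa>_def by (simp add: A.scl_sum_const)
    finally show ?thesis .
  qed
  have W2: "jbullet mul st W a = 0" if sd: "st d = - d" and Jd: "\<And>x. jbullet mul st d x = 0" for a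
  proof -
    have "jbullet mul st (zk k) a = 0" for k
    proof (cases "N - 1 - k")
      case 0
      thus ?thesis unfolding zk_def using Jd[of a] by (simp add: A.J_sclL A.scl_0R)
    next
      case (Suc r)
      have "st (scl (of_nat (2^k)) d) = - scl (of_nat (2^k)) d" using sd by (simp add: A.st_scl A.scl_simps)
      hence "zk k = 0" unfolding zk_def Suc by (rule A.g_skew)
      thus ?thesis by simp
    qed
    thus ?thesis unfolding W_def by (simp add: A.J_sumL)
  qed
  have FIN: "fin scl mul st one \<Phi> M W e (2^N) \<kappa>"
  proof -
    have "der scl mul st one \<Phi> M W"
      unfolding der_def der_axioms_def using AX H unfolding M_def by simp
    moreover have "idp scl mul st one e" unfolding idp_def idp_axioms_def using AX e_idem e_sym by simp
    ultimately have "derp scl mul st one \<Phi> M W e"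
      unfolding derp_def derp_axioms_def using e_nz e_ne1 by simp
    moreover have "M + 2 * \<kappa> \<noteq> 0"
    proof -
      have "M + 2 * \<kappa> = of_nat (2^N + 2 * (N * 2^(N-1)))" unfolding M_def \<kappa>_def by simp
      moreover have "(2::nat)^N + 2 * (N * 2^(N-1)) \<noteq> 0" by simp
      ultimately show ?thesis by (simp only: of_nat_eq_0_iff not_False_eq_True)
    qed
    ultimately show ?thesis
      unfolding fin_def fin_axioms_def using W1 W2 unfolding M_def \<kappa>_def d_def by simp
  qed
  show ?thesis using fin.star_der[OF FIN] .
qed


end
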